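(* Let $G$ be a pronilpotent group generated (topologically) by closed subgroups $G_1,\dots,G_t$ such that for every $i\geq1$ the closed subgroup $\gamma_i(G)$ is generated by the subgroups $\gamma_i(G)\cap G_j$, $1\leq j\leq t$. Then $G=G_1G_2\cdots G_t$.
   Context: In a profinite group, $\gamma_1(G)=G$ and $\gamma_i(G)$ is the closed subgroup generated by all commutators $[x,g]$ with $x\in\gamma_{i-1}(G)$, $g\in G$. A pronilpotent group is an inverse limit of finite nilpotent groups. *)

theory Defs
  imports "HOL-Analysis.Analysis" "HOL-Algebra.Algebra"
begin

definition commutator :: "('a, 'm) monoid_scheme \<Rightarrow> 'a \<Rightarrow> 'a \<Rightarrow> 'a" where
  "commutator G x g = inv\<^bsub>G\<^esub> x \<otimes>\<^bsub>G\<^esub> inv\<^bsub>G\<^esub> g \<otimes>\<^bsub>G\<^esub> x \<otimes>\<^bsub>G\<^esub> g"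

definition comm_set :: "('a, 'm) monoid_scheme \<Rightarrow> 'a set \<Rightarrow> 'a set" where
  "comm_set G A = {commutator G x g | x g. x \<in> A \<and> g \<in> carrier G}"

text \<open>Lower central series of an abstract group: gamma 1 = G,
  gamma (i+1) = subgroup generated by [gamma i, G].  (Index 0 is a dummy equal to G.)\<close>
fun lcs :: "('a, 'm) monoid_scheme \<Rightarrow> nat \<Rightarrow> 'a set" where
  "lcs G 0 = carrier G"
| "lcs G (Suc 0) = carrier G"
| "lcs G (Suc (Suc n)) = generate G (comm_set G (lcs G (Suc n)))"

definition nilpotent_group :: "('a, 'm) monoid_scheme \<Rightarrow> bool" where
  "nilpotent_group G \<longleftrightarrow> group G \<and> (\<exists>n\<ge>1. lcs G n = {\<one>\<^bsub>G\<^esub>})"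

definition topological_group :: "('a, 'm) monoid_scheme \<Rightarrow> 'a topology \<Rightarrow> bool" where
  "topological_group G T \<longleftrightarrow> group G \<and> topspace T = carrier G \<and>
     continuous_map (prod_topology T T) T (\<lambda>(x, y). x \<otimes>\<^bsub>G\<^esub> y) \<and>
     continuous_map T T (\<lambda>x. inv\<^bsub>G\<^esub> x)"

definition closed_subgroup :: "('a, 'm) monoid_scheme \<Rightarrow> 'a topology \<Rightarrow> 'a set \<Rightarrow> bool" where
  "closed_subgroup G T H \<longleftrightarrow> subgroup H G \<and> closedin T H"

definition closed_generate :: "('a, 'm) monoid_scheme \<Rightarrow> 'a topology \<Rightarrow> 'a set \<Rightarrow> 'a set" where
  "closed_generate G T S = \<Inter> {H. closed_subgroup G T H \<and> S \<subseteq> H}"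

text \<open>Lower central series of a topological group: gamma 1 = G, gamma (i+1) = closed subgroup
  generated by all [x,g] with x in gamma i, g in G.  (Index 0 is a dummy equal to G.)\<close>
fun tlcs :: "('a, 'm) monoid_scheme \<Rightarrow> 'a topology \<Rightarrow> nat \<Rightarrow> 'a set" where
  "tlcs G T 0 = carrier G"
| "tlcs G T (Suc 0) = carrier G"
| "tlcs G T (Suc (Suc n)) = closed_generate G T (comm_set G (tlcs G T (Suc n)))"

definition finite_nilpotent_inverse_system ::
  "'i set \<Rightarrow> ('i \<Rightarrow> 'i \<Rightarrow> bool) \<Rightarrow> ('i \<Rightarrow> 'b monoid) \<Rightarrow> ('i \<Rightarrow> 'i \<Rightarrow> 'b \<Rightarrow> 'b) \<Rightarrow> bool" where
  "finite_nilpotent_inverse_system I rel H \<phi> \<longleftrightarrow>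
     I \<noteq> {} \<and>
     (\<forall>i\<in>I. rel i i) \<and>
     (\<forall>i\<in>I. \<forall>j\<in>I. \<forall>k\<in>I. rel i j \<and> rel j k \<longrightarrow> rel i k) \<and>
     (\<forall>i\<in>I. \<forall>j\<in>I. \<exists>k\<in>I. rel i k \<and> rel j k) \<and>
     (\<forall>i\<in>I. group (H i) \<and> finite (carrier (H i)) \<and> nilpotent_group (H i)) \<and>
     (\<forall>i\<in>I. \<forall>j\<in>I. rel i j \<longrightarrow> \<phi> i j \<in> hom (H j) (H i)) \<and>
     (\<forall>i\<in>I. \<forall>x\<in>carrier (H i). \<phi> i i x = x) \<and>
     (\<forall>i\<in>I. \<forall>j\<in>I. \<forall>k\<in>I. rel i j \<and> rel j k \<longrightarrow>
        (\<forall>x\<in>carrier (H k). \<phi> i j (\<phi> j k x) = \<phi> i k x))"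

definition inv_lim_carrier ::
  "'i set \<Rightarrow> ('i \<Rightarrow> 'i \<Rightarrow> bool) \<Rightarrow> ('i \<Rightarrow> 'b monoid) \<Rightarrow> ('i \<Rightarrow> 'i \<Rightarrow> 'b \<Rightarrow> 'b) \<Rightarrow> ('i \<Rightarrow> 'b) set" where
  "inv_lim_carrier I rel H \<phi> =
     {x \<in> (\<Pi>\<^sub>E i\<in>I. carrier (H i)). \<forall>i\<in>I. \<forall>j\<in>I. rel i j \<longrightarrow> \<phi> i j (x j) = x i}"

definition inv_lim_topology ::
  "'i set \<Rightarrow> ('i \<Rightarrow> 'i \<Rightarrow> bool) \<Rightarrow> ('i \<Rightarrow> 'b monoid) \<Rightarrow> ('i \<Rightarrow> 'i \<Rightarrow> 'b \<Rightarrow> 'b) \<Rightarrow> ('i \<Rightarrow> 'b) topology" where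
  "inv_lim_topology I rel H \<phi> =
     subtopology (product_topology (\<lambda>i. discrete_topology (carrier (H i))) I) (inv_lim_carrier I rel H \<phi>)"

definition is_inverse_limit ::
  "('a, 'm) monoid_scheme \<Rightarrow> 'a topology \<Rightarrow>
   'i set \<Rightarrow> ('i \<Rightarrow> 'i \<Rightarrow> bool) \<Rightarrow> ('i \<Rightarrow> 'b monoid) \<Rightarrow> ('i \<Rightarrow> 'i \<Rightarrow> 'b \<Rightarrow> 'b) \<Rightarrow> bool" where
  "is_inverse_limit G T I rel H \<phi> \<longleftrightarrow>
     (\<exists>f. bij_betw f (carrier G) (inv_lim_carrier I rel H \<phi>) \<and>
          (\<forall>x\<in>carrier G. \<forall>y\<in>carrier G.
              f (x \<otimes>\<^bsub>G\<^esub> y) = (\<lambda>i\<in>I. f x i \<otimes>\<^bsub>H i\<^esub> f y i)) \<and>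
          homeomorphic_map T (inv_lim_topology I rel H \<phi>) f)"

text \<open>The index type 'i and the element type 'b of the finite groups
  are extra parameters (they are universally quantified type variables in any theorem).\<close>
definition pronilpotent ::
  "('a, 'm) monoid_scheme \<Rightarrow> 'a topology \<Rightarrow> 'i itself \<Rightarrow> 'b itself \<Rightarrow> bool" where
  "pronilpotent G T _ _ \<longleftrightarrow> topological_group G T \<and>
     (\<exists>(I::'i set) rel (H::'i \<Rightarrow> 'b monoid) \<phi>.
        finite_nilpotent_inverse_system I rel H \<phi> \<and> is_inverse_limit G T I rel H \<phi>)"

fun ordered_set_prod :: "('a, 'm) monoid_scheme \<Rightarrow> (nat \<Rightarrow> 'a set) \<Rightarrow> nat \<Rightarrow> 'a set" where
  "ordered_set_prod G Gs 0 = {\<one>\<^bsub>G\<^esub>}"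
| "ordered_set_prod G Gs (Suc k) = ordered_set_prod G Gs k <#>\<^bsub>G\<^esub> Gs (Suc k)"

end

theory Submission imports Defs begin

lemma fnis_D:
  assumes S: "finite_nilpotent_inverse_system I rel H \<phi>"
  shows "I \<noteq> {}" "\<And>i. i \<in> I \<Longrightarrow> rel i i"
    "\<And>i j k. i \<in> I \<Longrightarrow> j \<in> I \<Longrightarrow> k \<in> I \<Longrightarrow> rel i j \<Longrightarrow> rel j k \<Longrightarrow> rel i k"
    "\<And>i j. i \<in> I \<Longrightarrow> j \<in> I \<Longrightarrow> \<exists>k\<in>I. rel i k \<and> rel j k"
    "\<And>i. i \<in> I \<Longrightarrow> group (H i)" "\<And>i. i \<in> I \<Longrightarrow> finite (carrier (H i))"
    "\<And>i. i \<in> I \<Longrightarrow> nilpotent_group (H i)"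
    "\<And>i j. i \<in> I \<Longrightarrow> j \<in> I \<Longrightarrow> rel i j \<Longrightarrow> \<phi> i j \<in> hom (H j) (H i)"
    "\<And>i x. i \<in> I \<Longrightarrow> x \<in> carrier (H i) \<Longrightarrow> \<phi> i i x = x"
    "\<And>i j k x. i \<in> I \<Longrightarrow> j \<in> I \<Longrightarrow> k \<in> I \<Longrightarrow> rel i j \<Longrightarrow> rel j k \<Longrightarrow> x \<in> carrier (H k) \<Longrightarrow> \<phi> i j (\<phi> j k x) = \<phi> i k x"
  using S unfolding finite_nilpotent_inverse_system_def by (elim conjE; blast)+

lemma invlim_closed:
  assumes S: "finite_nilpotent_inverse_system I rel H \<phi>"
  shows "closedin (product_topology (\<lambda>i. discrete_topology (carrier (H i))) I) (inv_lim_carrier I rel H \<phi>)"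
proof -
  let ?X = "product_topology (\<lambda>i. discrete_topology (carrier (H i))) I"
  let ?F = "{{x \<in> topspace ?X. \<phi> i j (x j) = x i} | i j. i \<in> I \<and> j \<in> I \<and> rel i j}"
  have hom: "\<And>i j. i \<in> I \<Longrightarrow> j \<in> I \<Longrightarrow> rel i j \<Longrightarrow> \<phi> i j \<in> hom (H j) (H i)"
    using fnis_D(8)[OF S] by blast
  have cl: "closedin ?X A" if AF: "A \<in> ?F" for A
  proof -
    obtain i j where ij: "i \<in> I" "j \<in> I" "rel i j" and A: "A = {x \<in> topspace ?X. \<phi> i j (x j) = x i}"
      using AF by blast
    have c1: "continuous_map ?X (discrete_topology (carrier (H i))) (\<lambda>x. \<phi> i j (x j))"
    proof -
      have "continuous_map ?X (discrete_topology (carrier (H j))) (\<lambda>x. x j)"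
        using continuous_map_product_projection[OF ij(2), of "\<lambda>i. discrete_topology (carrier (H i))"] by simp
      moreover have "continuous_map (discrete_topology (carrier (H j))) (discrete_topology (carrier (H i))) (\<phi> i j)"
        using hom[OF ij] by (simp add: hom_def Pi_iff)
      ultimately show ?thesis using continuous_map_compose[of ?X _ "\<lambda>x. x j" _ "\<phi> i j"] by (simp add: o_def)
    qed
    have c2: "continuous_map ?X (discrete_topology (carrier (H i))) (\<lambda>x. x i)"
      using continuous_map_product_projection[OF ij(1), of "\<lambda>i. discrete_topology (carrier (H i))"] by simp
    show ?thesis unfolding A
      by (rule closedin_continuous_maps_eq[OF _ c1 c2]) simp
  qed
  obtain i0 where i0: "i0 \<in> I" "rel i0 i0" using fnis_D(1,2)[OF S] by blast
  have Fne: "?F \<noteq> {}" using i0 by blast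
  have eq: "inv_lim_carrier I rel H \<phi> = topspace ?X \<inter> \<Inter>?F"
  proof (rule Set.set_eqI)
    fix x
    show "x \<in> inv_lim_carrier I rel H \<phi> \<longleftrightarrow> x \<in> topspace ?X \<inter> \<Inter>?F"
      unfolding inv_lim_carrier_def topspace_product_topology topspace_discrete_topology
      by blast
  qed
  show ?thesis unfolding eq
    by (intro closedin_Int closedin_topspace closedin_Inter[OF Fne] cl)
qed

lemma invlim_compact_Hausdorff:
  assumes S: "finite_nilpotent_inverse_system I rel H \<phi>"
  shows "compact_space (inv_lim_topology I rel H \<phi>) \<and> Hausdorff_space (inv_lim_topology I rel H \<phi>)"
proof -
  let ?X = "product_topology (\<lambda>i. discrete_topology (carrier (H i))) I"
  have fin: "\<And>i. i \<in> I \<Longrightarrow> finite (carrier (H i))"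
    using fnis_D(6)[OF S] by blast
  have "compact_space ?X"
    using fin by (simp add: compact_space_product_topology compact_space_discrete_topology)
  then have "compactin ?X (inv_lim_carrier I rel H \<phi>)"
    using closedin_compact_space invlim_closed[OF S] by blast
  then have "compact_space (inv_lim_topology I rel H \<phi>)"
    unfolding inv_lim_topology_def by (rule compact_space_subtopology)
  moreover have "Hausdorff_space ?X"
    by (simp add: Hausdorff_space_product_topology)
  then have "Hausdorff_space (inv_lim_topology I rel H \<phi>)"
    unfolding inv_lim_topology_def by (rule Hausdorff_space_subtopology)
  ultimately show ?thesis by blast
qed


locale pn =
  fixes G :: "('a, 'm) monoid_scheme" (structure)
    and T :: "'a topology"
    and I :: "'i set" and rel :: "'i \<Rightarrow> 'i \<Rightarrow> bool" and H :: "'i \<Rightarrow> 'b monoid"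
    and \<phi> :: "'i \<Rightarrow> 'i \<Rightarrow> 'b \<Rightarrow> 'b" and f :: "'a \<Rightarrow> 'i \<Rightarrow> 'b"
  assumes tg: "topological_group G T"
    and S: "finite_nilpotent_inverse_system I rel H \<phi>"
    and fbij: "bij_betw f (carrier G) (inv_lim_carrier I rel H \<phi>)"
    and fmult: "\<forall>x\<in>carrier G. \<forall>y\<in>carrier G. f (x \<otimes> y) = (\<lambda>i\<in>I. f x i \<otimes>\<^bsub>H i\<^esub> f y i)"
    and fhomeo: "homeomorphic_map T (inv_lim_topology I rel H \<phi>) f"
begin

sublocale group G using tg by (simp add: topological_group_def)

lemma top: "topspace T = carrier G"
  using tg by (simp add: topological_group_def)

lemma cont_mult: "continuous_map (prod_topology T T) T (\<lambda>(x, y). x \<otimes> y)"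
  using tg by (simp add: topological_group_def)

lemma cont_inv: "continuous_map T T (\<lambda>x. inv x)"
  using tg by (simp add: topological_group_def)

lemma compact_T: "compact_space T" and Hausdorff_T: "Hausdorff_space T"
  using invlim_compact_Hausdorff[OF S] homeomorphic_map_imp_homeomorphic_space[OF fhomeo]
    homeomorphic_compact_space homeomorphic_Hausdorff_space by blast+

lemma cont_pair:
  assumes "continuous_map T T g" "continuous_map T T h"
  shows "continuous_map T T (\<lambda>y. g y \<otimes> h y)"
proof -
  have "continuous_map T (prod_topology T T) (\<lambda>y. (g y, h y))"
    using assms by (rule continuous_map_pairedI)
  from continuous_map_compose[OF this cont_mult] show ?thesis by (simp add: o_def)
qed

lemma cont_const: "x \<in> carrier G \<Longrightarrow> continuous_map T T (\<lambda>y. x)"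
  by (simp add: top)

lemma cont_ltrans: "x \<in> carrier G \<Longrightarrow> continuous_map T T (\<lambda>y. x \<otimes> y)"
  using cont_pair[OF cont_const continuous_map_id[unfolded id_def]] by blast

lemma cont_conj: "g \<in> carrier G \<Longrightarrow> continuous_map T T (\<lambda>y. g \<otimes> y \<otimes> inv g)"
  by (intro cont_pair cont_ltrans cont_const) auto

definition \<pi> :: "'i \<Rightarrow> 'a \<Rightarrow> 'b" where "\<pi> k x = f x k"

lemma f_in: "x \<in> carrier G \<Longrightarrow> f x \<in> inv_lim_carrier I rel H \<phi>"
  using fbij bij_betwE by blast

lemma \<pi>_carrier: "k \<in> I \<Longrightarrow> x \<in> carrier G \<Longrightarrow> \<pi> k x \<in> carrier (H k)"
  using f_in[of x] unfolding \<pi>_def inv_lim_carrier_def by (auto simp: PiE_iff)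

lemma \<pi>_hom: "k \<in> I \<Longrightarrow> \<pi> k \<in> hom G (H k)"
  using \<pi>_carrier fmult unfolding hom_def \<pi>_def by auto

lemma \<pi>_group_hom: "k \<in> I \<Longrightarrow> group_hom G (H k) (\<pi> k)"
  using \<pi>_hom fnis_D(5)[OF S] by (simp add: group_hom_def group_hom_axioms_def group_axioms)

lemma \<pi>_cont: "k \<in> I \<Longrightarrow> continuous_map T (discrete_topology (carrier (H k))) (\<pi> k)"
proof -
  assume k: "k \<in> I"
  have "continuous_map T (product_topology (\<lambda>i. discrete_topology (carrier (H i))) I) f"
    using homeomorphic_imp_continuous_map[OF fhomeo]
    unfolding inv_lim_topology_def continuous_map_in_subtopology by blast
  from continuous_map_compose[OF this continuous_map_product_projection[OF k]]
  show ?thesis by (simp add: o_def \<pi>_def[abs_def])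
qed

lemma \<pi>_compat: "i \<in> I \<Longrightarrow> k \<in> I \<Longrightarrow> rel i k \<Longrightarrow> x \<in> carrier G \<Longrightarrow> \<pi> i x = \<phi> i k (\<pi> k x)"
  using f_in[of x] unfolding \<pi>_def inv_lim_carrier_def by auto

lemma separation:
  assumes x: "x \<in> carrier G" and all: "\<forall>k\<in>I. \<pi> k x = \<one>\<^bsub>H k\<^esub>"
  shows "x = \<one>"
proof -
  have "\<forall>k\<in>I. \<pi> k \<one> = \<one>\<^bsub>H k\<^esub>"
    using \<pi>_group_hom group_hom.hom_one by blast
  then have eq: "\<forall>k\<in>I. f x k = f \<one> k" using all unfolding \<pi>_def by simp
  have "f x \<in> (\<Pi>\<^sub>E i\<in>I. carrier (H i))" "f \<one> \<in> (\<Pi>\<^sub>E i\<in>I. carrier (H i))"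
    using f_in x one_closed unfolding inv_lim_carrier_def by auto
  then have "f x = f \<one>" using eq by (metis PiE_ext)
  then show ?thesis using fbij x one_closed by (meson bij_betw_imp_inj_on inj_onD)
qed

end


lemma upper_bound:
  assumes S: "finite_nilpotent_inverse_system I rel H \<phi>"
  shows "finite J \<Longrightarrow> J \<subseteq> I \<Longrightarrow> \<exists>k\<in>I. \<forall>i\<in>J. rel i k"
proof (induction J rule: finite_induct)
  case empty
  then show ?case using fnis_D(1)[OF S] by blast
next
  case (insert a J)
  then obtain k where k: "k \<in> I" "\<forall>i\<in>J. rel i k" by blast
  obtain k' where k': "k' \<in> I" "rel a k'" "rel k k'" using fnis_D(4)[OF S, of a k] insert k by blast
  have "\<forall>i\<in>J. rel i k'" using k k' insert fnis_D(3)[OF S] by blast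
  then show ?case using k' by blast
qed

context pn begin

lemma closed_carrier: "closedin T (carrier G)"
  by (metis closedin_topspace top)

lemma cg_sub: "A \<subseteq> carrier G \<Longrightarrow> closed_generate G T A \<subseteq> carrier G"
  unfolding closed_generate_def closed_subgroup_def
  by (rule Inter_lower) (simp add: subgroup_self closed_carrier)

lemma cg_closed_subgroup: "A \<subseteq> carrier G \<Longrightarrow> closed_subgroup G T (closed_generate G T A)"
proof -
  assume A: "A \<subseteq> carrier G"
  let ?F = "{V. closed_subgroup G T V \<and> A \<subseteq> V}"
  have ne: "carrier G \<in> ?F" using A by (simp add: closed_subgroup_def subgroup_self closed_carrier)
  have "subgroup (\<Inter>?F) G"
    by (rule subgroups_Inter) (use ne in \<open>auto simp: closed_subgroup_def\<close>)
  moreover have "closedin T (\<Inter>?F)"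
    by (rule closedin_Inter) (use ne in \<open>auto simp: closed_subgroup_def\<close>)
  ultimately show ?thesis unfolding closed_generate_def closed_subgroup_def by blast
qed

lemma cg_incl: "A \<subseteq> closed_generate G T A"
  unfolding closed_generate_def by blast

lemma cg_min: "closed_subgroup G T V \<Longrightarrow> A \<subseteq> V \<Longrightarrow> closed_generate G T A \<subseteq> V"
  unfolding closed_generate_def by blast

lemma \<pi>_preimage_closed: "k \<in> I \<Longrightarrow> closedin T {x \<in> carrier G. \<pi> k x \<in> C}"
proof -
  assume k: "k \<in> I"
  have "closedin T {x \<in> topspace T. \<pi> k x \<in> C \<inter> carrier (H k)}"
    by (rule closedin_continuous_map_preimage[OF \<pi>_cont[OF k]]) simp
  moreover have "{x \<in> topspace T. \<pi> k x \<in> C \<inter> carrier (H k)} = {x \<in> carrier G. \<pi> k x \<in> C}"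
    using \<pi>_carrier[OF k] by (auto simp: top)
  ultimately show ?thesis by simp
qed

lemma \<pi>_preimage_open: "k \<in> I \<Longrightarrow> openin T {x \<in> carrier G. \<pi> k x \<in> C}"
proof -
  assume k: "k \<in> I"
  have "openin T {x \<in> topspace T. \<pi> k x \<in> C \<inter> carrier (H k)}"
    by (rule openin_continuous_map_preimage[OF \<pi>_cont[OF k]]) simp
  moreover have "{x \<in> topspace T. \<pi> k x \<in> C \<inter> carrier (H k)} = {x \<in> carrier G. \<pi> k x \<in> C}"
    using \<pi>_carrier[OF k] by (auto simp: top)
  ultimately show ?thesis by simp
qed

lemma kernel_eq: "kernel G (H k) (\<pi> k) = {x \<in> carrier G. \<pi> k x \<in> {\<one>\<^bsub>H k\<^esub>}}"
  by (auto simp: kernel_def)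

lemma nbhd:
  assumes U: "openin T U" "\<one> \<in> U"
  shows "\<exists>k\<in>I. kernel G (H k) (\<pi> k) \<subseteq> U"
proof -
  define Op where "Op i = {x \<in> carrier G. \<pi> i x \<in> - {\<one>\<^bsub>H i\<^esub>}}" for i
  have Usub: "U \<subseteq> carrier G" using openin_subset[OF U(1)] by (simp add: top)
  let ?C = "carrier G - U"
  have "closedin T ?C" using U(1) by (metis closedin_diff closedin_topspace top)
  then have cC: "compactin T ?C" using compact_T closedin_compact_space by blast
  have cover: "?C \<subseteq> \<Union>(Op ` I)"
  proof
    fix x assume x: "x \<in> ?C"
    then have "x \<noteq> \<one>" using U(2) by blast
    then obtain i where "i \<in> I" "\<pi> i x \<noteq> \<one>\<^bsub>H i\<^esub>" using separation x by blast
    then show "x \<in> \<Union>(Op ` I)" using x unfolding Op_def by blast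
  qed
  have "\<forall>B\<in>Op ` I. openin T B" unfolding Op_def using \<pi>_preimage_open by blast
  then obtain F where F: "finite F" "F \<subseteq> Op ` I" "?C \<subseteq> \<Union>F"
    using cC cover unfolding compactin_def by meson
  then obtain J where J: "J \<subseteq> I" "finite J" "F = Op ` J" using finite_subset_image by meson
  obtain k where k: "k \<in> I" "\<forall>i\<in>J. rel i k" using upper_bound[OF S J(2,1)] by blast
  have "kernel G (H k) (\<pi> k) \<subseteq> U"
  proof
    fix x assume x: "x \<in> kernel G (H k) (\<pi> k)"
    then have xc: "x \<in> carrier G" and x1: "\<pi> k x = \<one>\<^bsub>H k\<^esub>" by (auto simp: kernel_def)
    show "x \<in> U"
    proof (rule ccontr)
      assume "x \<notin> U"
      then obtain i where i: "i \<in> J" "x \<in> Op i" using F J xc by blast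
      have iI: "i \<in> I" using i J by blast
      have gh: "group_hom (H k) (H i) (\<phi> i k)"
        using fnis_D(5,8)[OF S] iI k i by (simp add: group_hom_def group_hom_axioms_def)
      have "\<pi> i x = \<one>\<^bsub>H i\<^esub>"
        using \<pi>_compat[OF iI k(1) _ xc] k i x1 group_hom.hom_one[OF gh] by simp
      then show False using i unfolding Op_def by simp
    qed
  qed
  then show ?thesis using k by blast
qed

end


context pn begin

lemma set_mult_mem: "z \<in> A <#> B \<longleftrightarrow> (\<exists>a\<in>A. \<exists>b\<in>B. z = a \<otimes> b)"
  unfolding set_mult_def by blast

lemma P_compact:
  assumes cs: "\<forall>j\<in>{1..t}. closed_subgroup G T (Gs j)"
  shows "k \<le> t \<Longrightarrow> compactin T (ordered_set_prod G Gs k) \<and> ordered_set_prod G Gs k \<subseteq> carrier G"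
proof (induction k)
  case 0
  then show ?case by (simp add: top)
next
  case (Suc k)
  let ?P = "ordered_set_prod G Gs k"
  have IH: "compactin T ?P" "?P \<subseteq> carrier G" using Suc by auto
  have gs: "closed_subgroup G T (Gs (Suc k))" using cs Suc.prems by auto
  then have gsc: "compactin T (Gs (Suc k))" "Gs (Suc k) \<subseteq> carrier G"
    using closedin_compact_space compact_T unfolding closed_subgroup_def
    by (auto dest: subgroup.subset)
  have eq: "?P <#> Gs (Suc k) = (\<lambda>(x, y). x \<otimes> y) ` (?P \<times> Gs (Suc k))"
    by (auto simp: set_mult_mem image_iff) blast
  have "compactin (prod_topology T T) (?P \<times> Gs (Suc k))"
    using IH gsc by (simp add: compactin_Times)
  then have "compactin T (?P <#> Gs (Suc k))"
    unfolding eq using image_compactin cont_mult by blast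
  moreover have "?P <#> Gs (Suc k) \<subseteq> carrier G"
    using IH(2) gsc(2) by (auto simp: set_mult_mem intro!: m_closed)
  ultimately show ?case by simp
qed

lemma final_top:
  assumes Pc: "closedin T P" and Ps: "P \<subseteq> carrier G"
    and dense: "\<forall>k\<in>I. carrier G \<subseteq> P <#> kernel G (H k) (\<pi> k)"
  shows "carrier G \<subseteq> P"
proof
  fix x assume x: "x \<in> carrier G"
  show "x \<in> P"
  proof (rule ccontr)
    assume xP: "x \<notin> P"
    let ?U = "{y \<in> topspace T. x \<otimes> y \<in> topspace T - P}"
    have "openin T (topspace T - P)" using Pc unfolding closedin_def by blast
    then have Uo: "openin T ?U" by (rule openin_continuous_map_preimage[OF cont_ltrans[OF x]])
    have U1: "\<one> \<in> ?U" using x xP by (simp add: top)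
    from nbhd[OF Uo U1] obtain k where k: "k \<in> I" "kernel G (H k) (\<pi> k) \<subseteq> ?U" by (elim bexE)
    have "x \<in> P <#> kernel G (H k) (\<pi> k)" using dense k(1) x by blast
    then obtain q c where qc: "q \<in> P" "c \<in> kernel G (H k) (\<pi> k)" "x = q \<otimes> c"
      unfolding set_mult_mem by blast
    have sk: "subgroup (kernel G (H k) (\<pi> k)) G"
      using group_hom.subgroup_kernel[OF \<pi>_group_hom[OF k(1)]] .
    have cc: "c \<in> carrier G" using qc(2) by (simp add: kernel_def)
    have qcar: "q \<in> carrier G" using qc(1) Ps by blast
    have "inv c \<in> kernel G (H k) (\<pi> k)" using subgroup.m_inv_closed[OF sk qc(2)] .
    from subsetD[OF k(2) this] have "x \<otimes> inv c \<notin> P" by simp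
    moreover have "x \<otimes> inv c = q" using qc(3) cc qcar by (simp add: m_assoc)
    ultimately show False using qc(1) by simp
  qed
qed

end


context group begin

lemma lcancel_inv [simp]: "x \<in> carrier G \<Longrightarrow> y \<in> carrier G \<Longrightarrow> inv x \<otimes> (x \<otimes> y) = y"
  by (simp add: m_assoc[symmetric])

lemma rcancel_inv [simp]: "x \<in> carrier G \<Longrightarrow> y \<in> carrier G \<Longrightarrow> x \<otimes> (inv x \<otimes> y) = y"
  by (simp add: m_assoc[symmetric])

lemma commutator_closed [simp]: "x \<in> carrier G \<Longrightarrow> h \<in> carrier G \<Longrightarrow> commutator G x h \<in> carrier G"
  by (simp add: commutator_def)

lemma conj_commutator:
  assumes "g \<in> carrier G" "x \<in> carrier G" "h \<in> carrier G"
  shows "g \<otimes> commutator G x h \<otimes> inv g = commutator G (g \<otimes> x \<otimes> inv g) (g \<otimes> h \<otimes> inv g)"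
  using assms by (simp add: commutator_def m_assoc inv_mult_group)

lemma swap1:
  assumes "x \<in> carrier G" "h \<in> carrier G"
  shows "x \<otimes> h = h \<otimes> x \<otimes> commutator G x h"
  using assms by (simp add: commutator_def m_assoc)

lemma swap2:
  assumes "x \<in> carrier G" "h \<in> carrier G"
  shows "h \<otimes> x = x \<otimes> h \<otimes> inv (commutator G x h)"
  using assms by (simp add: commutator_def m_assoc inv_mult_group)

lemma comm_set_sub: "A \<subseteq> carrier G \<Longrightarrow> comm_set G A \<subseteq> carrier G"
  unfolding comm_set_def by auto

lemma lcs_sub: "lcs G n \<subseteq> carrier G"
proof (induction n rule: nat_less_induct)
  case (1 n)
  show ?case
  proof (cases n)
    case 0 then show ?thesis by simp
  next
    case (Suc m)
    show ?thesis
    proof (cases m)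
      case 0 then show ?thesis using Suc by simp
    next
      case (Suc p)
      then have "lcs G (Suc p) \<subseteq> carrier G" using 1 \<open>n = Suc m\<close> by simp
      then show ?thesis using Suc \<open>n = Suc m\<close> by (simp add: generate_incl comm_set_sub)
    qed
  qed
qed

end

lemma (in group_hom) preimage_subgroup:
  assumes "subgroup K H"
  shows "subgroup {x \<in> carrier G. h x \<in> K} G"
proof (rule G.subgroupI)
  show "{x \<in> carrier G. h x \<in> K} \<noteq> {}"
    using subgroup.one_closed[OF assms] by (metis (mono_tags, lifting) G.one_closed empty_iff hom_one mem_Collect_eq)
qed (auto simp: subgroup.m_inv_closed[OF assms] subgroup.m_closed[OF assms] dest: subgroup.mem_carrier[OF assms])



context pn begin

lemma closed_subgroup_preimage_conj:
  assumes N: "closed_subgroup G T N" and g: "g \<in> carrier G"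
  shows "closed_subgroup G T {y \<in> carrier G. g \<otimes> y \<otimes> inv g \<in> N}"
proof -
  have sN: "subgroup N G" and cN: "closedin T N" using N unfolding closed_subgroup_def by auto
  have "closedin T {y \<in> topspace T. g \<otimes> y \<otimes> inv g \<in> N}"
    by (rule closedin_continuous_map_preimage[OF cont_conj[OF g] cN])
  then have c: "closedin T {y \<in> carrier G. g \<otimes> y \<otimes> inv g \<in> N}" by (simp add: top)
  have "subgroup {y \<in> carrier G. g \<otimes> y \<otimes> inv g \<in> N} G"
  proof (rule subgroupI)
    show "{y \<in> carrier G. g \<otimes> y \<otimes> inv g \<in> N} \<noteq> {}"
      using g subgroup.one_closed[OF sN] by (metis (mono_tags, lifting) empty_iff mem_Collect_eq one_closed r_inv r_one)
  next
    fix a assume a: "a \<in> {y \<in> carrier G. g \<otimes> y \<otimes> inv g \<in> N}"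
    then have ac: "a \<in> carrier G" and aN: "g \<otimes> a \<otimes> inv g \<in> N" by auto
    have "inv (g \<otimes> a \<otimes> inv g) = g \<otimes> inv a \<otimes> inv g"
      using g ac by (simp add: inv_mult_group m_assoc)
    then show "inv a \<in> {y \<in> carrier G. g \<otimes> y \<otimes> inv g \<in> N}"
      using subgroup.m_inv_closed[OF sN aN] ac by simp
  next
    fix a b assume a: "a \<in> {y \<in> carrier G. g \<otimes> y \<otimes> inv g \<in> N}" and b: "b \<in> {y \<in> carrier G. g \<otimes> y \<otimes> inv g \<in> N}"
    then have ac: "a \<in> carrier G" and aN: "g \<otimes> a \<otimes> inv g \<in> N"
      and bc: "b \<in> carrier G" and bN: "g \<otimes> b \<otimes> inv g \<in> N" by auto
    have "(g \<otimes> a \<otimes> inv g) \<otimes> (g \<otimes> b \<otimes> inv g) = g \<otimes> (a \<otimes> b) \<otimes> inv g"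
      using g ac bc by (simp add: m_assoc)
    then show "a \<otimes> b \<in> {y \<in> carrier G. g \<otimes> y \<otimes> inv g \<in> N}"
      using subgroup.m_closed[OF sN aN bN] ac bc by simp
  qed auto
  then show ?thesis using c unfolding closed_subgroup_def by simp
qed

lemma tlcs_props:
  "closed_subgroup G T (tlcs G T (Suc n)) \<and> (\<forall>g\<in>carrier G. \<forall>x\<in>tlcs G T (Suc n). g \<otimes> x \<otimes> inv g \<in> tlcs G T (Suc n))"
proof (induction n)
  case 0
  then show ?case by (simp add: closed_subgroup_def subgroup_self closed_carrier)
next
  case (Suc n)
  let ?N = "tlcs G T (Suc n)"
  let ?A = "comm_set G ?N"
  have Ns: "?N \<subseteq> carrier G" using Suc unfolding closed_subgroup_def by (auto dest: subgroup.subset)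
  have As: "?A \<subseteq> carrier G" using comm_set_sub[OF Ns] .
  have eq: "tlcs G T (Suc (Suc n)) = closed_generate G T ?A" by simp
  have cs: "closed_subgroup G T (closed_generate G T ?A)" using cg_closed_subgroup[OF As] .
  have conj: "\<forall>g\<in>carrier G. \<forall>x\<in>closed_generate G T ?A. g \<otimes> x \<otimes> inv g \<in> closed_generate G T ?A"
  proof (intro ballI)
    fix g x assume g: "g \<in> carrier G" and x: "x \<in> closed_generate G T ?A"
    let ?V = "{y \<in> carrier G. g \<otimes> y \<otimes> inv g \<in> closed_generate G T ?A}"
    have "?A \<subseteq> ?V"
    proof
      fix z assume "z \<in> ?A"
      then obtain a h where ah: "a \<in> ?N" "h \<in> carrier G" "z = commutator G a h"
        unfolding comm_set_def by blast
      have ac: "a \<in> carrier G" using ah(1) Ns by blast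
      have "g \<otimes> a \<otimes> inv g \<in> ?N" using Suc g ah(1) by blast
      moreover have "g \<otimes> h \<otimes> inv g \<in> carrier G" using g ah(2) by simp
      ultimately have "commutator G (g \<otimes> a \<otimes> inv g) (g \<otimes> h \<otimes> inv g) \<in> ?A"
        unfolding comm_set_def by blast
      then have "g \<otimes> z \<otimes> inv g \<in> ?A" using conj_commutator[OF g ac ah(2)] ah(3) by simp
      then show "z \<in> ?V" using cg_incl[of ?A] ah ac by auto
    qed
    then have "closed_generate G T ?A \<subseteq> ?V"
      by (rule cg_min[OF closed_subgroup_preimage_conj[OF cs g]])
    then show "g \<otimes> x \<otimes> inv g \<in> closed_generate G T ?A" using x by blast
  qed
  show ?case unfolding eq using cs conj by blast
qed

lemma tlcs_sub: "tlcs G T (Suc n) \<subseteq> carrier G"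
  using tlcs_props[of n] unfolding closed_subgroup_def by (auto dest: subgroup.subset)

lemma tlcs_comm: "x \<in> tlcs G T (Suc n) \<Longrightarrow> h \<in> carrier G \<Longrightarrow> commutator G x h \<in> tlcs G T (Suc (Suc n))"
proof -
  assume a: "x \<in> tlcs G T (Suc n)" "h \<in> carrier G"
  have "commutator G x h \<in> comm_set G (tlcs G T (Suc n))" unfolding comm_set_def using a by blast
  then show ?thesis using cg_incl[of "comm_set G (tlcs G T (Suc n))"] by auto
qed

lemma tlcs_normal: "tlcs G T (Suc n) \<lhd> G"
  using tlcs_props[of n] unfolding normal_inv_iff closed_subgroup_def by blast

lemma \<pi>_tlcs: "k \<in> I \<Longrightarrow> \<pi> k ` tlcs G T (Suc n) \<subseteq> lcs (H k) (Suc n)"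
proof (induction n)
  case 0
  then show ?case using \<pi>_carrier by auto
next
  case (Suc n)
  have gH: "group (H k)" using fnis_D(5)[OF S Suc.prems] .
  have gh: "group_hom G (H k) (\<pi> k)" using \<pi>_group_hom[OF Suc.prems] .
  let ?L = "lcs (H k) (Suc (Suc n))"
  have Ls: "subgroup ?L (H k)"
    using group.generate_is_subgroup[OF gH] group.comm_set_sub[OF gH] group.lcs_sub[OF gH] by simp
  let ?V = "{x \<in> carrier G. \<pi> k x \<in> ?L}"
  have "subgroup ?V G" using group_hom.preimage_subgroup[OF gh Ls] .
  moreover have "closedin T ?V" using \<pi>_preimage_closed[OF Suc.prems] .
  ultimately have cV: "closed_subgroup G T ?V" unfolding closed_subgroup_def by simp
  have "comm_set G (tlcs G T (Suc n)) \<subseteq> ?V"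
  proof
    fix z assume "z \<in> comm_set G (tlcs G T (Suc n))"
    then obtain a h where ah: "a \<in> tlcs G T (Suc n)" "h \<in> carrier G" "z = commutator G a h"
      unfolding comm_set_def by blast
    have ac: "a \<in> carrier G" using ah(1) tlcs_sub by blast
    have "\<pi> k z = commutator (H k) (\<pi> k a) (\<pi> k h)"
      using ah ac gh by (simp add: commutator_def group_hom.hom_mult group_hom.hom_inv)
    moreover have "\<pi> k a \<in> lcs (H k) (Suc n)" using Suc.IH[OF Suc.prems] ah(1) by blast
    moreover have "\<pi> k h \<in> carrier (H k)" using \<pi>_carrier[OF Suc.prems ah(2)] .
    ultimately have "\<pi> k z \<in> comm_set (H k) (lcs (H k) (Suc n))" unfolding comm_set_def by blast
    then have "\<pi> k z \<in> ?L" by (simp add: generate.incl)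
    moreover have "z \<in> carrier G" using ah ac by simp
    ultimately show "z \<in> ?V" by simp
  qed
  then have "tlcs G T (Suc (Suc n)) \<subseteq> ?V" using cg_min[OF cV] by simp
  then show ?case by auto
qed

end


context group begin

lemma set_mult_mem': "z \<in> A <#> B \<longleftrightarrow> (\<exists>a\<in>A. \<exists>b\<in>B. z = a \<otimes> b)"
  unfolding set_mult_def by blast

lemma set_multE:
  assumes "z \<in> A <#> B"
  obtains a b where "a \<in> A" "b \<in> B" "z = a \<otimes> b"
  using assms unfolding set_mult_def by blast

lemma set_multI: "a \<in> A \<Longrightarrow> b \<in> B \<Longrightarrow> z = a \<otimes> b \<Longrightarrow> z \<in> A <#> B"
  unfolding set_mult_def by blast

lemma osp_sub: "\<forall>j\<in>{1..k}. Gs j \<subseteq> carrier G \<Longrightarrow> ordered_set_prod G Gs k \<subseteq> carrier G"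
proof (induction k)
  case 0 then show ?case by simp
next
  case (Suc k)
  then have "ordered_set_prod G Gs k \<subseteq> carrier G" "Gs (Suc k) \<subseteq> carrier G" by auto
  then show ?case by (auto simp: set_mult_mem' intro!: m_closed)
qed

lemma osp_one: "\<forall>j\<in>{1..k}. \<one> \<in> Gs j \<Longrightarrow> \<one> \<in> ordered_set_prod G Gs k"
proof (induction k)
  case 0 then show ?case by simp
next
  case (Suc k)
  then have "\<one> \<in> ordered_set_prod G Gs k" "\<one> \<in> Gs (Suc k)" by auto
  then show ?case unfolding ordered_set_prod.simps set_mult_mem' by force
qed

lemma osp_incl: "\<forall>j\<in>{1..k}. \<one> \<in> Gs j \<and> Gs j \<subseteq> carrier G \<Longrightarrow> j \<in> {1..k} \<Longrightarrow> Gs j \<subseteq> ordered_set_prod G Gs k"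
proof (induction k)
  case 0 then show ?case by simp
next
  case (Suc k)
  show ?case
  proof
    fix a assume a: "a \<in> Gs j"
    show "a \<in> ordered_set_prod G Gs (Suc k)"
    proof (cases "j = Suc k")
      case True
      have "\<one> \<in> ordered_set_prod G Gs k" using osp_one Suc.prems(1) by simp
      moreover have "a \<in> carrier G" using a True Suc.prems(1) by force
      then have "a = \<one> \<otimes> a" by simp
      ultimately show ?thesis using a True unfolding ordered_set_prod.simps set_mult_mem' by blast
    next
      case False
      then have "a \<in> ordered_set_prod G Gs k" using Suc a by auto
      moreover have "a \<in> carrier G" using a Suc.prems by force
      then have "a = a \<otimes> \<one>" by simp
      moreover have "\<one> \<in> Gs (Suc k)" using Suc.prems(1) by simp
      ultimately show ?thesis unfolding ordered_set_prod.simps set_mult_mem' by blast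
    qed
  qed
qed

end

locale alg = group G for G (structure) +
  fixes M N
  assumes Msg: "subgroup M G"
    and Mconj: "\<forall>x\<in>carrier G. \<forall>m\<in>M. inv x \<otimes> m \<otimes> x \<in> M"
    and Nsg: "subgroup N G"
    and comm: "\<forall>x\<in>N. \<forall>h\<in>carrier G. commutator G x h \<in> M"
begin

lemma Mc: "m \<in> M \<Longrightarrow> m \<in> carrier G" using subgroup.mem_carrier[OF Msg] .
lemma Nc: "x \<in> N \<Longrightarrow> x \<in> carrier G" using subgroup.mem_carrier[OF Nsg] .
lemma Mmult: "m \<in> M \<Longrightarrow> m' \<in> M \<Longrightarrow> m \<otimes> m' \<in> M" using subgroup.m_closed[OF Msg] .
lemma Minv: "m \<in> M \<Longrightarrow> inv m \<in> M" using subgroup.m_inv_closed[OF Msg] .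
lemma Mc1: "x \<in> carrier G \<Longrightarrow> m \<in> M \<Longrightarrow> inv x \<otimes> m \<otimes> x \<in> M" using Mconj by blast
lemma Mone: "\<one> \<in> M" using subgroup.one_closed[OF Msg] .

lemma R_sub_N: "ordered_set_prod G (\<lambda>j. N \<inter> Gs j) k \<subseteq> N"
proof (induction k)
  case 0 then show ?case using subgroup.one_closed[OF Nsg] by simp
next
  case (Suc k)
  then show ?case using subgroup.m_closed[OF Nsg] by (auto simp: set_mult_mem' subset_iff)
qed

lemma C1:
  assumes Gs: "\<forall>j\<in>{1..t}. subgroup (Gs j) G"
  shows "k \<le> t \<Longrightarrow> ordered_set_prod G Gs k <#> ordered_set_prod G (\<lambda>j. N \<inter> Gs j) k \<subseteq> ordered_set_prod G Gs k <#> M"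
proof (induction k)
  case 0
  have "{\<one>} <#> {\<one>} = {\<one>}" "{\<one>} <#> M = M" using Mc by (auto simp: set_mult_mem')
  then show ?case using Mone by simp
next
  case (Suc k)
  have Ps: "ordered_set_prod G Gs k \<subseteq> carrier G"
  proof -
    have "\<forall>j\<in>{1..k}. Gs j \<subseteq> carrier G" using Gs Suc.prems subgroup.subset by fastforce
    then show ?thesis by (rule osp_sub)
  qed
  have gk: "subgroup (Gs (Suc k)) G" using Gs Suc.prems by simp
  show ?case
  proof
    fix z assume "z \<in> ordered_set_prod G Gs (Suc k) <#> ordered_set_prod G (\<lambda>j. N \<inter> Gs j) (Suc k)"
    then have "z \<in> (ordered_set_prod G Gs k <#> Gs (Suc k)) <#> (ordered_set_prod G (\<lambda>j. N \<inter> Gs j) k <#> (N \<inter> Gs (Suc k)))"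
      by simp
    then obtain x y where xy: "x \<in> ordered_set_prod G Gs k <#> Gs (Suc k)"
      "y \<in> ordered_set_prod G (\<lambda>j. N \<inter> Gs j) k <#> (N \<inter> Gs (Suc k))" "z = x \<otimes> y"
      by (rule set_multE)
    from xy(1) obtain p g where pg: "p \<in> ordered_set_prod G Gs k" "g \<in> Gs (Suc k)" "x = p \<otimes> g"
      by (rule set_multE)
    from xy(2) obtain r a' where ra': "r \<in> ordered_set_prod G (\<lambda>j. N \<inter> Gs j) k" "a' \<in> N \<inter> Gs (Suc k)" "y = r \<otimes> a'"
      by (rule set_multE)
    define a where "a = a'"
    have ra: "r \<in> ordered_set_prod G (\<lambda>j. N \<inter> Gs j) k" "a \<in> N" "a \<in> Gs (Suc k)" "y = r \<otimes> a"
      using ra' unfolding a_def by auto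
    have z: "z = (p \<otimes> g) \<otimes> (r \<otimes> a)" using xy(3) pg(3) ra(4) by simp
    have pc: "p \<in> carrier G" using subsetD[OF Ps pg(1)] .
    have gc: "g \<in> carrier G" using subgroup.mem_carrier[OF gk pg(2)] .
    have rN: "r \<in> N" using subsetD[OF R_sub_N ra(1)] .
    have rc: "r \<in> carrier G" using Nc[OF rN] .
    have ac: "a \<in> carrier G" using Nc[OF ra(2)] .
    define c where "c = commutator G r g"
    have cM: "c \<in> M" unfolding c_def using bspec[OF bspec[OF comm rN] gc] .
    have cc: "c \<in> carrier G" using Mc[OF cM] .
    have IH: "ordered_set_prod G Gs k <#> ordered_set_prod G (\<lambda>j. N \<inter> Gs j) k \<subseteq> ordered_set_prod G Gs k <#> M"
      using Suc.IH Suc.prems by simp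
    have "p \<otimes> r \<in> ordered_set_prod G Gs k <#> ordered_set_prod G (\<lambda>j. N \<inter> Gs j) k"
      using pg(1) ra(1) by (rule set_multI) simp
    then have "p \<otimes> r \<in> ordered_set_prod G Gs k <#> M" using IH by blast
    then obtain p' m2 where p': "p' \<in> ordered_set_prod G Gs k" "m2 \<in> M" "p \<otimes> r = p' \<otimes> m2"
      by (rule set_multE)
    have p'c: "p' \<in> carrier G" using subsetD[OF Ps p'(1)] .
    have m2c: "m2 \<in> carrier G" using Mc[OF p'(2)] .
    have e1: "g \<otimes> r = r \<otimes> g \<otimes> inv c" unfolding c_def using swap2[OF rc gc] .
    define m3 where "m3 = inv (g \<otimes> a) \<otimes> m2 \<otimes> (g \<otimes> a)"
    define m1 where "m1 = inv a \<otimes> inv c \<otimes> a"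
    have m3M: "m3 \<in> M" unfolding m3_def using Mc1[OF m_closed[OF gc ac] p'(2)] .
    have m1M: "m1 \<in> M" unfolding m1_def using Mc1[OF ac Minv[OF cM]] .
    have "z = p \<otimes> (g \<otimes> r) \<otimes> a" using z pc gc rc ac by (simp add: m_assoc)
    also have "\<dots> = p \<otimes> (r \<otimes> g \<otimes> inv c) \<otimes> a" using e1 by simp
    also have "\<dots> = (p \<otimes> r) \<otimes> g \<otimes> inv c \<otimes> a" using pc gc rc ac cc by (simp add: m_assoc)
    also have "\<dots> = (p' \<otimes> m2) \<otimes> g \<otimes> inv c \<otimes> a" using p'(3) by simp
    also have "\<dots> = (p' \<otimes> (g \<otimes> a)) \<otimes> (m3 \<otimes> m1)"
      unfolding m3_def m1_def using p'c m2c gc ac cc by (simp add: m_assoc inv_mult_group)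
    finally have zeq: "z = (p' \<otimes> (g \<otimes> a)) \<otimes> (m3 \<otimes> m1)" .
    have "g \<otimes> a \<in> Gs (Suc k)" using subgroup.m_closed[OF gk pg(2) ra(3)] .
    then have "p' \<otimes> (g \<otimes> a) \<in> ordered_set_prod G Gs (Suc k)"
      using p'(1) by (simp add: set_multI)
    moreover have "m3 \<otimes> m1 \<in> M" using Mmult[OF m3M m1M] .
    ultimately show "z \<in> ordered_set_prod G Gs (Suc k) <#> M" using zeq by (rule set_multI)
  qed
qed

end


context alg begin

lemma R_c: "r \<in> ordered_set_prod G (\<lambda>j. N \<inter> Gs j) k \<Longrightarrow> r \<in> carrier G"
  using Nc subsetD[OF R_sub_N] by blast

lemma C2inv:
  assumes Gs: "\<forall>j\<in>{1..t}. subgroup (Gs j) G"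
  shows "k \<le> t \<Longrightarrow> r \<in> ordered_set_prod G (\<lambda>j. N \<inter> Gs j) k \<Longrightarrow> inv r \<in> ordered_set_prod G (\<lambda>j. N \<inter> Gs j) k <#> M"
proof (induction k arbitrary: r)
  case 0
  then have "r = \<one>" by simp
  then show ?case using Mone by (intro set_multI[of \<one> _ \<one>]) simp_all
next
  case (Suc k)
  have gk: "subgroup (Gs (Suc k)) G" using Gs Suc.prems by simp
  from Suc.prems(2) have "r \<in> ordered_set_prod G (\<lambda>j. N \<inter> Gs j) k <#> (N \<inter> Gs (Suc k))" by simp
  then obtain r0 a where r0: "r0 \<in> ordered_set_prod G (\<lambda>j. N \<inter> Gs j) k" "a \<in> N \<inter> Gs (Suc k)" "r = r0 \<otimes> a"
    by (rule set_multE)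
  have aN: "a \<in> N" and aG: "a \<in> Gs (Suc k)" using r0(2) by auto
  have ac: "a \<in> carrier G" using Nc[OF aN] .
  have r0c: "r0 \<in> carrier G" using R_c[OF r0(1)] .
  have "inv r0 \<in> ordered_set_prod G (\<lambda>j. N \<inter> Gs j) k <#> M" using Suc.IH[OF _ r0(1)] Suc.prems(1) by simp
  then obtain r1 m where r1: "r1 \<in> ordered_set_prod G (\<lambda>j. N \<inter> Gs j) k" "m \<in> M" "inv r0 = r1 \<otimes> m"
    by (rule set_multE)
  have r1c: "r1 \<in> carrier G" using R_c[OF r1(1)] .
  have mc: "m \<in> carrier G" using Mc[OF r1(2)] .
  have iaN: "inv a \<in> N" using subgroup.m_inv_closed[OF Nsg aN] .
  have iaG: "inv a \<in> Gs (Suc k)" using subgroup.m_inv_closed[OF gk aG] .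
  define c where "c = commutator G (inv a) r1"
  have cM: "c \<in> M" unfolding c_def using bspec[OF bspec[OF comm iaN] r1c] .
  have cc: "c \<in> carrier G" using Mc[OF cM] .
  have e: "inv a \<otimes> r1 = r1 \<otimes> inv a \<otimes> c" unfolding c_def using swap1[OF inv_closed[OF ac] r1c] .
  have "inv r = inv a \<otimes> inv r0" using r0(3) ac r0c by (simp add: inv_mult_group)
  also have "\<dots> = (inv a \<otimes> r1) \<otimes> m" using r1(3) ac r1c mc by (simp add: m_assoc)
  also have "\<dots> = (r1 \<otimes> inv a) \<otimes> (c \<otimes> m)" using e ac r1c mc cc by (simp add: m_assoc)
  finally have eq: "inv r = (r1 \<otimes> inv a) \<otimes> (c \<otimes> m)" .
  have "r1 \<otimes> inv a \<in> ordered_set_prod G (\<lambda>j. N \<inter> Gs j) (Suc k)"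
    using r1(1) iaN iaG by (simp add: set_multI)
  then show ?case using eq Mmult[OF cM r1(2)] by (intro set_multI) auto
qed

lemma C2:
  assumes Gs: "\<forall>j\<in>{1..t}. subgroup (Gs j) G"
  shows "subgroup (ordered_set_prod G (\<lambda>j. N \<inter> Gs j) t <#> M) G"
proof (rule subgroupI)
  let ?R = "ordered_set_prod G (\<lambda>j. N \<inter> Gs j) t"
  have Gs': "\<forall>j\<in>{1..t}. subgroup (N \<inter> Gs j) G" using Gs subgroups_Inter_pair[OF Nsg] by blast
  have c1: "?R <#> ?R \<subseteq> ?R <#> M"
    using C1[OF Gs' order_refl] by (simp add: Int_absorb Int_assoc[symmetric])
  show "?R <#> M \<subseteq> carrier G"
  proof
    fix z assume "z \<in> ?R <#> M"
    then obtain r m where "r \<in> ?R" "m \<in> M" "z = r \<otimes> m" by (rule set_multE)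
    then show "z \<in> carrier G" using R_c Mc by simp
  qed
  have "\<one> \<in> ?R" using osp_one[of t "\<lambda>j. N \<inter> Gs j"] Gs' subgroup.one_closed by blast
  then show "?R <#> M \<noteq> {}" using Mone by (metis empty_iff set_multI r_one one_closed)
next
  let ?R = "ordered_set_prod G (\<lambda>j. N \<inter> Gs j) t"
  fix z assume "z \<in> ?R <#> M"
  then obtain r m where rm: "r \<in> ?R" "m \<in> M" "z = r \<otimes> m" by (rule set_multE)
  have rc: "r \<in> carrier G" using R_c[OF rm(1)] .
  have mc: "m \<in> carrier G" using Mc[OF rm(2)] .
  have "inv r \<in> ?R <#> M" using C2inv[OF Gs order_refl rm(1)] .
  then obtain r1 m1 where r1: "r1 \<in> ?R" "m1 \<in> M" "inv r = r1 \<otimes> m1" by (rule set_multE)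
  have r1c: "r1 \<in> carrier G" using R_c[OF r1(1)] .
  have m1c: "m1 \<in> carrier G" using Mc[OF r1(2)] .
  have mM: "inv r1 \<otimes> inv m \<otimes> r1 \<in> M" using Mc1[OF r1c Minv[OF rm(2)]] by simp
  have "inv z = inv m \<otimes> inv r" using rm(3) rc mc by (simp add: inv_mult_group)
  also have "\<dots> = r1 \<otimes> ((inv r1 \<otimes> inv m \<otimes> r1) \<otimes> m1)" using r1(3) r1c m1c mc by (simp add: m_assoc)
  finally show "inv z \<in> ?R <#> M" using r1(1) Mmult[OF mM r1(2)] by (intro set_multI) auto
next
  let ?R = "ordered_set_prod G (\<lambda>j. N \<inter> Gs j) t"
  have Gs': "\<forall>j\<in>{1..t}. subgroup (N \<inter> Gs j) G" using Gs subgroups_Inter_pair[OF Nsg] by blast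
  have c1: "?R <#> ?R \<subseteq> ?R <#> M"
    using C1[OF Gs' order_refl] by (simp add: Int_absorb Int_assoc[symmetric])
  fix z w assume "z \<in> ?R <#> M" "w \<in> ?R <#> M"
  then obtain r m r' m' where rm: "r \<in> ?R" "m \<in> M" "z = r \<otimes> m" and rm': "r' \<in> ?R" "m' \<in> M" "w = r' \<otimes> m'"
    by (meson set_multE)
  have rc: "r \<in> carrier G" using R_c[OF rm(1)] .
  have mc: "m \<in> carrier G" using Mc[OF rm(2)] .
  have r'c: "r' \<in> carrier G" using R_c[OF rm'(1)] .
  have m'c: "m' \<in> carrier G" using Mc[OF rm'(2)] .
  have "r \<otimes> r' \<in> ?R <#> ?R" using rm(1) rm'(1) by (rule set_multI) simp
  then have "r \<otimes> r' \<in> ?R <#> M" using c1 by blast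
  then obtain r2 m2 where r2: "r2 \<in> ?R" "m2 \<in> M" "r \<otimes> r' = r2 \<otimes> m2" by (rule set_multE)
  have m2c: "m2 \<in> carrier G" using Mc[OF r2(2)] .
  have r2c: "r2 \<in> carrier G" using R_c[OF r2(1)] .
  have m3: "inv r' \<otimes> m \<otimes> r' \<in> M" using Mc1[OF r'c rm(2)] .
  have "z \<otimes> w = (r \<otimes> r') \<otimes> ((inv r' \<otimes> m \<otimes> r') \<otimes> m')" using rm(3) rm'(3) rc mc r'c m'c by (simp add: m_assoc)
  also have "\<dots> = r2 \<otimes> (m2 \<otimes> ((inv r' \<otimes> m \<otimes> r') \<otimes> m'))" using r2(3) r2c m2c r'c mc m'c by (simp add: m_assoc)
  finally show "z \<otimes> w \<in> ?R <#> M" using r2(1) Mmult[OF r2(2) Mmult[OF m3 rm'(2)]] by (intro set_multI) auto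
qed

end


context group begin

lemma normal_prod:
  assumes A: "A \<lhd> G" and B: "B \<lhd> G"
  shows "subgroup (A <#> B) G \<and> (\<forall>x\<in>carrier G. \<forall>m\<in>A <#> B. inv x \<otimes> m \<otimes> x \<in> A <#> B)"
proof -
  have sA: "subgroup A G" and sB: "subgroup B G" using A B normal_imp_subgroup by auto
  have Ac: "\<And>a. a \<in> A \<Longrightarrow> a \<in> carrier G" using subgroup.mem_carrier[OF sA] .
  have Bc: "\<And>a. a \<in> B \<Longrightarrow> a \<in> carrier G" using subgroup.mem_carrier[OF sB] .
  have cA: "\<And>x a. x \<in> carrier G \<Longrightarrow> a \<in> A \<Longrightarrow> inv x \<otimes> a \<otimes> x \<in> A" using normal.inv_op_closed1[OF A] .
  have cB: "\<And>x a. x \<in> carrier G \<Longrightarrow> a \<in> B \<Longrightarrow> inv x \<otimes> a \<otimes> x \<in> B" using normal.inv_op_closed1[OF B] .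
  have sub: "subgroup (A <#> B) G"
  proof (rule subgroupI)
    show "A <#> B \<subseteq> carrier G"
    proof
      fix z assume "z \<in> A <#> B"
      then obtain a b where "a \<in> A" "b \<in> B" "z = a \<otimes> b" by (rule set_multE)
      then show "z \<in> carrier G" using Ac Bc by simp
    qed
    have "\<one> \<otimes> \<one> \<in> A <#> B" using subgroup.one_closed[OF sA] subgroup.one_closed[OF sB] by (rule set_multI) simp
    then show "A <#> B \<noteq> {}" by blast
  next
    fix z assume "z \<in> A <#> B"
    then obtain a b where ab: "a \<in> A" "b \<in> B" "z = a \<otimes> b" by (rule set_multE)
    have ac: "a \<in> carrier G" using Ac[OF ab(1)] .
    have bc: "b \<in> carrier G" using Bc[OF ab(2)] .
    have "inv z = inv a \<otimes> (a \<otimes> inv b \<otimes> inv a)" using ab(3) ac bc by (simp add: inv_mult_group m_assoc)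
    moreover have "a \<otimes> inv b \<otimes> inv a \<in> B" using cB[OF inv_closed[OF ac] subgroup.m_inv_closed[OF sB ab(2)]] ac by simp
    ultimately show "inv z \<in> A <#> B" using subgroup.m_inv_closed[OF sA ab(1)] by (intro set_multI) auto
  next
    fix z w assume "z \<in> A <#> B" "w \<in> A <#> B"
    then obtain a b a' b' where ab: "a \<in> A" "b \<in> B" "z = a \<otimes> b" and ab': "a' \<in> A" "b' \<in> B" "w = a' \<otimes> b'"
      by (meson set_multE)
    have ac: "a \<in> carrier G" using Ac[OF ab(1)] .
    have bc: "b \<in> carrier G" using Bc[OF ab(2)] .
    have a'c: "a' \<in> carrier G" using Ac[OF ab'(1)] .
    have b'c: "b' \<in> carrier G" using Bc[OF ab'(2)] .
    have "z \<otimes> w = (a \<otimes> a') \<otimes> ((inv a' \<otimes> b \<otimes> a') \<otimes> b')" using ab(3) ab'(3) ac bc a'c b'c by (simp add: m_assoc)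
    moreover have "(inv a' \<otimes> b \<otimes> a') \<otimes> b' \<in> B" using subgroup.m_closed[OF sB cB[OF a'c ab(2)] ab'(2)] .
    ultimately show "z \<otimes> w \<in> A <#> B" using subgroup.m_closed[OF sA ab(1) ab'(1)] by (intro set_multI) auto
  qed
  have "\<forall>x\<in>carrier G. \<forall>m\<in>A <#> B. inv x \<otimes> m \<otimes> x \<in> A <#> B"
  proof (intro ballI)
    fix x z assume x: "x \<in> carrier G" and "z \<in> A <#> B"
    then obtain a b where ab: "a \<in> A" "b \<in> B" "z = a \<otimes> b" by (meson set_multE)
    have ac: "a \<in> carrier G" using Ac[OF ab(1)] .
    have bc: "b \<in> carrier G" using Bc[OF ab(2)] .
    have "inv x \<otimes> z \<otimes> x = (inv x \<otimes> a \<otimes> x) \<otimes> (inv x \<otimes> b \<otimes> x)" using ab(3) ac bc x by (simp add: m_assoc)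
    then show "inv x \<otimes> z \<otimes> x \<in> A <#> B" using cA[OF x ab(1)] cB[OF x ab(2)] by (intro set_multI) auto
  qed
  then show ?thesis using sub by blast
qed

end

context pn begin

lemma closed_if_open_sub:
  assumes A: "subgroup A G" and KA: "K \<subseteq> A" and K: "subgroup K G" "openin T K"
  shows "closedin T A"
proof -
  have Ac: "A \<subseteq> carrier G" using subgroup.subset[OF A] .
  have "openin T (carrier G - A)"
  proof (subst openin_subopen, intro ballI)
    fix y assume y: "y \<in> carrier G - A"
    then have yc: "y \<in> carrier G" by simp
    let ?W = "{z \<in> topspace T. inv y \<otimes> z \<in> K}"
    have Wo: "openin T ?W" using openin_continuous_map_preimage[OF cont_ltrans[OF inv_closed[OF yc]] K(2)] .
    have "y \<in> ?W" using yc subgroup.one_closed[OF K(1)] by (simp add: top)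
    moreover have "?W \<subseteq> carrier G - A"
    proof
      fix z assume z: "z \<in> ?W"
      then have zc: "z \<in> carrier G" and zK: "inv y \<otimes> z \<in> K" by (auto simp: top)
      show "z \<in> carrier G - A"
      proof (rule ccontr)
        assume "z \<notin> carrier G - A"
        then have zA: "z \<in> A" using zc by simp
        have "inv y \<otimes> z \<in> A" using zK KA by blast
        then have "(inv y \<otimes> z) \<otimes> inv z \<in> A" using subgroup.m_closed[OF A _ subgroup.m_inv_closed[OF A zA]] by blast
        then have "inv y \<in> A" using yc zc by (simp add: m_assoc)
        then have "inv (inv y) \<in> A" using subgroup.m_inv_closed[OF A] by blast
        then show False using y yc by simp
      qed
    qed
    ultimately show "\<exists>T'. openin T T' \<and> y \<in> T' \<and> T' \<subseteq> carrier G - A" using Wo by blast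
  qed
  then show ?thesis unfolding closedin_def top using Ac by simp
qed

lemma main_alg:
  assumes cs: "\<forall>j\<in>{1..t}. closed_subgroup G T (Gs j)"
    and hyp: "\<forall>i\<ge>1. tlcs G T i = closed_generate G T (\<Union>j\<in>{1..t}. tlcs G T i \<inter> Gs j)"
    and k: "k \<in> I"
  shows "carrier G \<subseteq> ordered_set_prod G Gs t <#> tlcs G T (Suc n) <#> kernel G (H k) (\<pi> k)"
proof (induction n)
  let ?K = "kernel G (H k) (\<pi> k)"
  let ?P = "ordered_set_prod G Gs t"
  have Gs: "\<forall>j\<in>{1..t}. subgroup (Gs j) G" using cs unfolding closed_subgroup_def by blast
  have Ksg: "subgroup ?K G" using group_hom.subgroup_kernel[OF \<pi>_group_hom[OF k]] .
  have P1: "\<one> \<in> ?P" using osp_one[of t Gs] Gs subgroup.one_closed by blast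
  case 0
  show ?case
  proof
    fix x assume x: "x \<in> carrier G"
    have h1: "\<one> \<otimes> x \<in> ?P <#> tlcs G T (Suc 0)" using P1 x by (intro set_multI) auto
    have h2: "x = (\<one> \<otimes> x) \<otimes> \<one>" using x by simp
    show "x \<in> ?P <#> tlcs G T (Suc 0) <#> ?K" using set_multI[OF h1 subgroup.one_closed[OF Ksg] h2] .
  qed
next
  let ?K = "kernel G (H k) (\<pi> k)"
  let ?P = "ordered_set_prod G Gs t"
  have Gs: "\<forall>j\<in>{1..t}. subgroup (Gs j) G" using cs unfolding closed_subgroup_def by blast
  have Ksg: "subgroup ?K G" using group_hom.subgroup_kernel[OF \<pi>_group_hom[OF k]] .
  have Kn: "?K \<lhd> G" using group_hom.normal_kernel[OF \<pi>_group_hom[OF k]] .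
  have Ko: "openin T ?K" unfolding kernel_eq by (rule \<pi>_preimage_open[OF k])
  have Kc: "\<And>x. x \<in> ?K \<Longrightarrow> x \<in> carrier G" using subgroup.mem_carrier[OF Ksg] .
  have Ps: "?P \<subseteq> carrier G" using osp_sub[of t Gs] Gs subgroup.subset by blast
  case (Suc n)
  let ?N = "tlcs G T (Suc n)"
  let ?N' = "tlcs G T (Suc (Suc n))"
  let ?M = "?N' <#> ?K"
  have np: "subgroup ?M G \<and> (\<forall>x\<in>carrier G. \<forall>m\<in>?M. inv x \<otimes> m \<otimes> x \<in> ?M)"
    using normal_prod[OF tlcs_normal Kn] .
  have N'1: "\<one> \<in> ?N'" using tlcs_normal[of "Suc n"] normal_imp_subgroup subgroup.one_closed by blast
  have N'c: "\<And>x. x \<in> ?N' \<Longrightarrow> x \<in> carrier G" using tlcs_sub by blast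
  have NM: "?N' \<subseteq> ?M"
  proof
    fix x assume xN: "x \<in> ?N'"
    have "x = x \<otimes> \<one>" using N'c[OF xN] by simp
    then show "x \<in> ?M" using set_multI[OF xN subgroup.one_closed[OF Ksg]] by blast
  qed
  have KM: "?K \<subseteq> ?M"
  proof
    fix x assume xK: "x \<in> ?K"
    have "x = \<one> \<otimes> x" using Kc[OF xK] by simp
    then show "x \<in> ?M" using set_multI[OF N'1 xK] by blast
  qed
  have Nsg: "subgroup ?N G" using tlcs_normal normal_imp_subgroup by blast
  have al: "alg G ?M ?N"
  proof (intro alg.intro alg_axioms.intro is_group)
    show "subgroup ?M G" using np by blast
    show "\<forall>x\<in>carrier G. \<forall>m\<in>?M. inv x \<otimes> m \<otimes> x \<in> ?M" using np by blast
    show "subgroup ?N G" using Nsg .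
    show "\<forall>x\<in>?N. \<forall>h\<in>carrier G. commutator G x h \<in> ?M" using tlcs_comm NM by blast
  qed
  let ?R = "ordered_set_prod G (\<lambda>j. ?N \<inter> Gs j) t"
  let ?A = "?R <#> ?M"
  have Asg: "subgroup ?A G" using alg.C2[OF al Gs] .
  have R1: "\<one> \<in> ?R" using osp_one[of t "\<lambda>j. ?N \<inter> Gs j"] Gs Nsg subgroup.one_closed by blast
  have KA: "?K \<subseteq> ?A"
  proof
    fix x assume "x \<in> ?K"
    then have xM: "x \<in> ?M" using KM by blast
    have "x = \<one> \<otimes> x" using Kc \<open>x \<in> ?K\<close> by simp
    then show "x \<in> ?A" using set_multI[OF R1 xM] by blast
  qed
  have Acl: "closedin T ?A" using closed_if_open_sub[OF Asg KA Ksg Ko] .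
  have Nsub: "?N \<subseteq> ?A"
  proof -
    have "(\<Union>j\<in>{1..t}. ?N \<inter> Gs j) \<subseteq> ?A"
    proof
      fix x assume "x \<in> (\<Union>j\<in>{1..t}. ?N \<inter> Gs j)"
      then obtain j where j: "j \<in> {1..t}" "x \<in> ?N \<inter> Gs j" by blast
      have "\<forall>j\<in>{1..t}. \<one> \<in> ?N \<inter> Gs j \<and> ?N \<inter> Gs j \<subseteq> carrier G"
        using Gs Nsg subgroup.one_closed subgroup.subset by blast
      then have "x \<in> ?R" using osp_incl[of t "\<lambda>j. ?N \<inter> Gs j" j] j by blast
      moreover have "x \<in> carrier G" using j Nsg subgroup.subset by blast
      ultimately show "x \<in> ?A" using set_multI[OF _ subgroup.one_closed[OF np[THEN conjunct1]], of x] by simp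
    qed
    moreover have "closed_subgroup G T ?A" using Asg Acl unfolding closed_subgroup_def by blast
    ultimately have "closed_generate G T (\<Union>j\<in>{1..t}. ?N \<inter> Gs j) \<subseteq> ?A" using cg_min by blast
    moreover have "?N = closed_generate G T (\<Union>j\<in>{1..t}. ?N \<inter> Gs j)" using hyp by simp
    ultimately show ?thesis by simp
  qed
  have C1: "?P <#> ?R \<subseteq> ?P <#> ?M" using alg.C1[OF al Gs order_refl] .
  show ?case
  proof
    fix x assume x: "x \<in> carrier G"
    then have "x \<in> ?P <#> ?N <#> ?K" using Suc.IH by blast
    then obtain qy c where qy: "qy \<in> ?P <#> ?N" "c \<in> ?K" "x = qy \<otimes> c" by (rule set_multE)
    from qy(1) obtain q y where q: "q \<in> ?P" "y \<in> ?N" "qy = q \<otimes> y" by (rule set_multE)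
    have "y \<in> ?A" using q(2) Nsub by blast
    then obtain r m where rm: "r \<in> ?R" "m \<in> ?M" "y = r \<otimes> m" by (rule set_multE)
    have "q \<otimes> r \<in> ?P <#> ?R" using q(1) rm(1) by (rule set_multI) simp
    then have "q \<otimes> r \<in> ?P <#> ?M" using C1 by blast
    then obtain q' m' where q': "q' \<in> ?P" "m' \<in> ?M" "q \<otimes> r = q' \<otimes> m'" by (rule set_multE)
    have Mm: "\<And>a b. a \<in> ?M \<Longrightarrow> b \<in> ?M \<Longrightarrow> a \<otimes> b \<in> ?M" using subgroup.m_closed[OF np[THEN conjunct1]] .
    have Mc: "\<And>a. a \<in> ?M \<Longrightarrow> a \<in> carrier G" using subgroup.mem_carrier[OF np[THEN conjunct1]] .
    have "m' \<otimes> m \<otimes> c \<in> ?M" using Mm[OF Mm[OF q'(2) rm(2)]] KM qy(2) by blast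
    then obtain n'' c' where nc: "n'' \<in> ?N'" "c' \<in> ?K" "m' \<otimes> m \<otimes> c = n'' \<otimes> c'" by (rule set_multE)
    have qc: "q \<in> carrier G" using Ps q(1) by blast
    have rc: "r \<in> carrier G" using alg.R_c[OF al rm(1)] .
    have q'c: "q' \<in> carrier G" using Ps q'(1) by blast
    have mc: "m \<in> carrier G" using Mc[OF rm(2)] .
    have m'c: "m' \<in> carrier G" using Mc[OF q'(2)] .
    have cc: "c \<in> carrier G" using Kc[OF qy(2)] .
    have "x = (q \<otimes> r) \<otimes> m \<otimes> c" using qy(3) q(3) rm(3) qc rc mc cc by (simp add: m_assoc)
    also have "\<dots> = q' \<otimes> (m' \<otimes> m \<otimes> c)" using q'(3) q'c m'c mc cc by (simp add: m_assoc)
    also have "\<dots> = (q' \<otimes> n'') \<otimes> c'" using nc(3) q'c N'c[OF nc(1)] Kc[OF nc(2)] by (simp add: m_assoc)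
    finally have xe: "x = (q' \<otimes> n'') \<otimes> c'" .
    have "q' \<otimes> n'' \<in> ?P <#> ?N'" using q'(1) nc(1) by (rule set_multI) simp
    then show "x \<in> ?P <#> ?N' <#> ?K" using nc(2) xe by (rule set_multI)
  qed
qed

end


context pn begin

lemma pn_main:
  assumes cs: "\<forall>j\<in>{1..t}. closed_subgroup G T (Gs j)"
    and hyp: "\<forall>i\<ge>1. tlcs G T i = closed_generate G T (\<Union>j\<in>{1..t}. tlcs G T i \<inter> Gs j)"
  shows "carrier G = ordered_set_prod G Gs t"
proof -
  let ?P = "ordered_set_prod G Gs t"
  have Pc: "compactin T ?P" and Ps: "?P \<subseteq> carrier G" using P_compact[OF cs order_refl] by auto
  have Pcl: "closedin T ?P" using compactin_imp_closedin[OF Hausdorff_T Pc] .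
  have dense: "\<forall>k\<in>I. carrier G \<subseteq> ?P <#> kernel G (H k) (\<pi> k)"
  proof
    fix k assume k: "k \<in> I"
    let ?K = "kernel G (H k) (\<pi> k)"
    have Ksg: "subgroup ?K G" using group_hom.subgroup_kernel[OF \<pi>_group_hom[OF k]] .
    obtain n where n: "n \<ge> 1" "lcs (H k) n = {\<one>\<^bsub>H k\<^esub>}"
      using fnis_D(7)[OF S k] unfolding nilpotent_group_def by blast
    then obtain n' where n': "n = Suc n'" by (cases n) auto
    have "\<pi> k ` tlcs G T (Suc n') \<subseteq> {\<one>\<^bsub>H k\<^esub>}" using \<pi>_tlcs[OF k, of n'] n n' by simp
    then have NK: "tlcs G T (Suc n') \<subseteq> ?K" using tlcs_sub[of n'] by (auto simp: kernel_def)
    have main: "carrier G \<subseteq> ?P <#> tlcs G T (Suc n') <#> ?K" using main_alg[OF cs hyp k] .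
    show "carrier G \<subseteq> ?P <#> ?K"
    proof
      fix x assume "x \<in> carrier G"
      then have "x \<in> ?P <#> tlcs G T (Suc n') <#> ?K" using main by blast
      then obtain qy c where qy: "qy \<in> ?P <#> tlcs G T (Suc n')" "c \<in> ?K" "x = qy \<otimes> c" by (rule set_multE)
      from qy(1) obtain q y where q: "q \<in> ?P" "y \<in> tlcs G T (Suc n')" "qy = q \<otimes> y" by (rule set_multE)
      have yK: "y \<in> ?K" using q(2) NK by blast
      have "x = q \<otimes> (y \<otimes> c)" using qy(3) q(3) Ps q(1) subgroup.mem_carrier[OF Ksg] yK qy(2)
        by (simp add: m_assoc subset_iff)
      then show "x \<in> ?P <#> ?K" using set_multI[OF q(1) subgroup.m_closed[OF Ksg yK qy(2)]] by blast
    qed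
  qed
  have "carrier G \<subseteq> ?P" using final_top[OF Pcl Ps dense] .
  then show ?thesis using Ps by blast
qed

end

theorem lemma7p2:
  fixes G :: "('a, 'm) monoid_scheme" and T :: "'a topology"
    and Gs :: "nat \<Rightarrow> 'a set" and t :: nat
  assumes "pronilpotent G T TYPE('i) TYPE('b)"
    and "\<forall>j\<in>{1..t}. closed_subgroup G T (Gs j)"
    and "closed_generate G T (\<Union>j\<in>{1..t}. Gs j) = carrier G"
    and "\<forall>i\<ge>1. tlcs G T i = closed_generate G T (\<Union>j\<in>{1..t}. tlcs G T i \<inter> Gs j)"
  shows "carrier G = ordered_set_prod G Gs t"
proof -
  from assms(1) have tg: "topological_group G T"
    and ex: "\<exists>(I::'i set) rel (H::'i \<Rightarrow> 'b monoid) \<phi>.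
        finite_nilpotent_inverse_system I rel H \<phi> \<and> is_inverse_limit G T I rel H \<phi>"
    unfolding pronilpotent_def by auto
  then obtain I :: "'i set" and rel and H :: "'i \<Rightarrow> 'b monoid" and \<phi>
    where S: "finite_nilpotent_inverse_system I rel H \<phi>" and L: "is_inverse_limit G T I rel H \<phi>"
    by blast
  from L obtain f where f: "bij_betw f (carrier G) (inv_lim_carrier I rel H \<phi>)"
    "\<forall>x\<in>carrier G. \<forall>y\<in>carrier G. f (x \<otimes>\<^bsub>G\<^esub> y) = (\<lambda>i\<in>I. f x i \<otimes>\<^bsub>H i\<^esub> f y i)"
    "homeomorphic_map T (inv_lim_topology I rel H \<phi>) f"
    unfolding is_inverse_limit_def by blast
  have "pn G T I rel H \<phi> f"
    using tg S f by (intro pn.intro)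
  then show ?thesis using pn.pn_main assms(2,4) by blast
qed

end
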